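(* In the sleeping multi-armed bandit setting, let $(\ell_t)_{t\ge1}$ be i.i.d. random loss vectors in $[0,1]^K$ with mean vector $\mu$, where for each $t$, $\ell_t$ is independent of everything determined before the learner observes $\ell_t(k_t)$ at round $t$ (including $S_1,\dots,S_t$ and $k_1,\dots,k_t$), and let $(S_t)_{t\ge1}$ be any sequence of availability sets such that $S_t$ may depend only on $(\ell_s)_{s\le t-1}$ (and past play). Then for any algorithm, $$\max_{\pi}R_T^{\mathrm{policy}}(\pi)=\max_{\sigma}\mathbb E\big[R_T^{\mathrm{ordering}}(\sigma)\big],$$ where $\pi$ ranges over all policies and $\sigma$ over all orderings of $[K]$.
   Context: Sleeping multi-armed bandit setting: $K$ arms $[K]$. At each round $t$ a nonempty availability set $S_t\subseteq[K]$ is revealed, the learner (possibly randomized, using only $S_1,\dots,S_t$, previously observed losses and internal randomness) selects $k_t\in S_t$ and observes $\ell_t(k_t)$. An ordering is a permutation $\sigma=(\sigma_1,\dots,\sigma_K)$ of $[K]$; for nonempty $S\subseteq[K]$, $\sigma(S)=\sigma_m$ with $m=\min\{i:\sigma_i\in S\}$. Ordering regret: $R_T^{\mathrm{ordering}}(\sigma)=\sum_{t=1}^T\big(\ell_t(k_t)-\ell_t(\sigma(S_t))\big)$. A policy is a map $\pi$ from nonempty subsets of $[K]$ to $[K]$ with $\pi(S)\in S$. Policy regret: $R_T^{\mathrm{policy}}(\pi)=\mathbb E\big[\sum_{t=1}^T\ell_t(k_t)-\sum_{t=1}^T\ell_t(\pi(S_t))\big]$, the expectation being over availabilities, losses and the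 learner's randomness. *)

theory Defs
  imports "HOL-Probability.Probability"
begin

text \<open>Arms are the elements of a finite type 'k (playing the role of [K], K = CARD('k)).
  An ordering is a list enumerating every arm exactly once.\<close>

definition orderings :: "'k::finite list set" where
  "orderings = {xs. distinct xs \<and> set xs = UNIV}"

definition ord_select :: "'k list \<Rightarrow> 'k set \<Rightarrow> 'k" where
  "ord_select xs S = hd (filter (\<lambda>x. x \<in> S) xs)"

definition policies :: "('k set \<Rightarrow> 'k) set" where
  "policies = {\<pi>. \<forall>S. S \<noteq> {} \<longrightarrow> \<pi> S \<in> S}"

definition loss_space :: "('k \<Rightarrow> real) measure" where
  "loss_space = Pi\<^sub>M UNIV (\<lambda>_. borel)"

definition ordering_regret ::
  "(nat \<Rightarrow> 'w \<Rightarrow> 'k \<Rightarrow> real) \<Rightarrow> (nat \<Rightarrow> 'w \<Rightarrow> 'k set) \<Rightarrow> (nat \<Rightarrow> 'w \<Rightarrow> 'k)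
    \<Rightarrow> nat \<Rightarrow> 'k list \<Rightarrow> 'w \<Rightarrow> real" where
  "ordering_regret L S k T \<sigma> \<omega> =
     (\<Sum>t\<in>{1..T}. L t \<omega> (k t \<omega>) - L t \<omega> (ord_select \<sigma> (S t \<omega>)))"

definition policy_regret ::
  "'w measure \<Rightarrow> (nat \<Rightarrow> 'w \<Rightarrow> 'k \<Rightarrow> real) \<Rightarrow> (nat \<Rightarrow> 'w \<Rightarrow> 'k set) \<Rightarrow> (nat \<Rightarrow> 'w \<Rightarrow> 'k)
    \<Rightarrow> nat \<Rightarrow> ('k set \<Rightarrow> 'k) \<Rightarrow> real" where
  "policy_regret M L S k T \<pi> =
     (\<integral>\<omega>. (\<Sum>t\<in>{1..T}. L t \<omega> (k t \<omega>)) \<partial>M) - (\<integral>\<omega>. (\<Sum>t\<in>{1..T}. L t \<omega> (\<pi> (S t \<omega>))) \<partial>M)"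

text \<open>History strictly before observing the loss of round t: past loss vectors
  (rounds 1..t-1), availability sets and chosen arms of rounds 1..t.\<close>
definition history ::
  "(nat \<Rightarrow> 'w \<Rightarrow> 'k \<Rightarrow> real) \<Rightarrow> (nat \<Rightarrow> 'w \<Rightarrow> 'k set) \<Rightarrow> (nat \<Rightarrow> 'w \<Rightarrow> 'k) \<Rightarrow> nat \<Rightarrow> 'w
    \<Rightarrow> (nat \<Rightarrow> 'k \<Rightarrow> real) \<times> (nat \<Rightarrow> 'k set) \<times> (nat \<Rightarrow> 'k)" where
  "history L S k t \<omega> =
     (restrict (\<lambda>s. L s \<omega>) {1..<t}, restrict (\<lambda>s. S s \<omega>) {1..t}, restrict (\<lambda>s. k s \<omega>) {1..t})"

definition history_space :: "nat \<Rightarrow> ((nat \<Rightarrow> 'k \<Rightarrow> real) \<times> (nat \<Rightarrow> 'k set) \<times> (nat \<Rightarrow> 'k)) measure" where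
  "history_space t = Pi\<^sub>M {1..<t} (\<lambda>_. loss_space) \<Otimes>\<^sub>M
     (Pi\<^sub>M {1..t} (\<lambda>_. count_space UNIV) \<Otimes>\<^sub>M Pi\<^sub>M {1..t} (\<lambda>_. count_space UNIV))"

text \<open>Independence of two random variables with possibly different value types:
  the sigma-algebras they generate are independent (HOL's indep_var needs equal types).\<close>
definition indep_rvs :: "'w measure \<Rightarrow> 'a measure \<Rightarrow> ('w \<Rightarrow> 'a) \<Rightarrow> 'b measure \<Rightarrow> ('w \<Rightarrow> 'b) \<Rightarrow> bool" where
  "indep_rvs M Ma X Mb Y \<longleftrightarrow>
     prob_space.indep_set M {X -` A \<inter> space M | A. A \<in> sets Ma} {Y -` B \<inter> space M | B. B \<in> sets Mb}"

end

theory Submission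
  imports Defs
begin

lemma (in prob_space) int_stable_gen:
  "Int_stable {Z -` A \<inter> space M | A. A \<in> sets N}"
  unfolding Int_stable_def
proof (intro ballI)
  fix a b assume "a \<in> {Z -` A \<inter> space M | A. A \<in> sets N}" "b \<in> {Z -` A \<inter> space M | A. A \<in> sets N}"
  then obtain A B where "a = Z -` A \<inter> space M" "A \<in> sets N" "b = Z -` B \<inter> space M" "B \<in> sets N" by blast
  then show "a \<inter> b \<in> {Z -` A \<inter> space M | A. A \<in> sets N}"
    by (intro CollectI exI[of _ "A \<inter> B"]) auto
qed

lemma (in prob_space) gen_sub:
  assumes X: "X \<in> measurable M Ma" and g: "g \<in> measurable Ma N"
  shows "{(g \<circ> X) -` A \<inter> space M | A. A \<in> sets N} \<subseteq> {X -` A \<inter> space M | A. A \<in> sets Ma}"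
proof
  fix a assume "a \<in> {(g \<circ> X) -` A \<inter> space M | A. A \<in> sets N}"
  then obtain A where A: "a = (g \<circ> X) -` A \<inter> space M" "A \<in> sets N" by blast
  have "a = X -` (g -` A \<inter> space Ma) \<inter> space M"
    using A(1) X by (auto dest: measurable_space)
  moreover have "g -` A \<inter> space Ma \<in> sets Ma" using g A(2) by (rule measurable_sets)
  ultimately show "a \<in> {X -` A \<inter> space M | A. A \<in> sets Ma}" by blast
qed

lemma (in prob_space) indep_rvs_var:
  assumes "indep_rvs M Ma X Mb Y" "X \<in> measurable M Ma" "Y \<in> measurable M Mb"
    and g: "g \<in> measurable Ma N1" and h: "h \<in> measurable Mb N2"
  shows "indep_var N1 (g \<circ> X) N2 (h \<circ> Y)"
  unfolding indep_var_eq
proof (intro conjI)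
  show "random_variable N1 (g \<circ> X)" "random_variable N2 (h \<circ> Y)" using assms by auto
  have "indep_set {(g \<circ> X) -` A \<inter> space M | A. A \<in> sets N1} {(h \<circ> Y) -` A \<inter> space M | A. A \<in> sets N2}"
    using assms(1) unfolding indep_rvs_def indep_set_def
    by (rule indep_sets_mono_sets) (use gen_sub[OF assms(2) g] gen_sub[OF assms(3) h] in \<open>auto split: bool.split\<close>)
  then show "indep_set (sigma_sets (space M) {(g \<circ> X) -` A \<inter> space M |A. A \<in> sets N1})
     (sigma_sets (space M) {(h \<circ> Y) -` A \<inter> space M |A. A \<in> sets N2})"
    by (intro indep_set_sigma_sets int_stable_gen)
qed

lemma hd_sorted_min:
  fixes \<mu> :: "'k \<Rightarrow> real"
  assumes "sorted (map \<mu> xs)" "x \<in> set xs"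
  shows "\<mu> (hd xs) \<le> \<mu> x"
  using assms by (cases xs) auto

lemma ord_select_min:
  fixes \<mu> :: "'k::finite \<Rightarrow> real"
  assumes "sorted (map \<mu> xs)" "set xs = UNIV" "x \<in> A"
  shows "\<mu> (ord_select xs A) \<le> \<mu> x"
  unfolding ord_select_def
  by (rule hd_sorted_min) (use assms in \<open>auto simp: sorted_filter\<close>)

lemma ord_select_policy:
  assumes "set xs = UNIV"
  shows "ord_select xs \<in> policies"
  unfolding policies_def ord_select_def
proof (intro CollectI allI impI)
  fix A :: "'a set" assume "A \<noteq> {}"
  then have "filter (\<lambda>x. x \<in> A) xs \<noteq> []" using assms by (auto simp: filter_empty_conv)
  then have "hd (filter (\<lambda>x. x \<in> A) xs) \<in> set (filter (\<lambda>x. x \<in> A) xs)" by (rule hd_in_set)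
  then show "hd (filter (\<lambda>x. x \<in> A) xs) \<in> A" by simp
qed

lemma hist_meas:
  fixes L :: "nat \<Rightarrow> 'w \<Rightarrow> 'k::finite \<Rightarrow> real" and S :: "nat \<Rightarrow> 'w \<Rightarrow> 'k set" and k :: "nat \<Rightarrow> 'w \<Rightarrow> 'k"
  assumes meas_l: "\<And>t. t \<ge> 1 \<Longrightarrow> L t \<in> measurable M loss_space"
    and meas_S: "\<And>t. t \<ge> 1 \<Longrightarrow> S t \<in> measurable M (count_space UNIV)"
    and meas_k: "\<And>t. t \<ge> 1 \<Longrightarrow> k t \<in> measurable M (count_space UNIV)"
  shows "history L S k t \<in> measurable M (history_space t)"
  unfolding history_def[abs_def] history_space_def
  by (intro measurable_Pair measurable_restrict) (auto intro: meas_l meas_S meas_k)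

lemma key_integral:
  fixes L :: "nat \<Rightarrow> 'w \<Rightarrow> 'k::finite \<Rightarrow> real" and S :: "nat \<Rightarrow> 'w \<Rightarrow> 'k set" and k :: "nat \<Rightarrow> 'w \<Rightarrow> 'k"
    and f :: "'k set \<Rightarrow> 'k"
  assumes prob: "prob_space M"
    and meas_l: "\<And>t. t \<ge> 1 \<Longrightarrow> L t \<in> measurable M loss_space"
    and meas_S: "\<And>t. t \<ge> 1 \<Longrightarrow> S t \<in> measurable M (count_space UNIV)"
    and meas_k: "\<And>t. t \<ge> 1 \<Longrightarrow> k t \<in> measurable M (count_space UNIV)"
    and range_l: "\<And>t \<omega> j. t \<ge> 1 \<Longrightarrow> \<omega> \<in> space M \<Longrightarrow> 0 \<le> L t \<omega> j \<and> L t \<omega> j \<le> 1"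
    and iid_ident: "\<And>t. t \<ge> 1 \<Longrightarrow> distr M loss_space (L t) = distr M loss_space (L 1)"
    and indep_hist: "\<And>t. t \<ge> 1 \<Longrightarrow>
       indep_rvs M loss_space (L t) (history_space t) (history L S k t)"
    and t: "t \<ge> 1"
  shows "(\<integral>\<omega>. L t \<omega> (f (S t \<omega>)) \<partial>M) = (\<integral>\<omega>. (\<integral>\<omega>'. L 1 \<omega>' (f (S t \<omega>)) \<partial>M) \<partial>M)"
proof -
  interpret prob_space M by (rule prob)
  define I where "I j \<omega> = (if f (S t \<omega>) = j then 1 else 0::real)" for j \<omega>
  have mLj: "(\<lambda>\<omega>. L s \<omega> j) \<in> borel_measurable M" if "s \<ge> 1" for s j
  proof -
    have "(\<lambda>v. v j) \<in> borel_measurable loss_space"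
      unfolding loss_space_def by (rule measurable_component_singleton) simp
    from measurable_compose[OF meas_l[OF that] this] show ?thesis .
  qed
  have mI: "I j \<in> borel_measurable M" for j
    unfolding I_def
    by (rule measurable_compose[OF meas_S[OF t], of "\<lambda>x. if f x = j then 1 else 0"]) simp
  have intL: "integrable M (\<lambda>\<omega>. L s \<omega> j)" if "s \<ge> 1" for s j
    by (rule integrable_const_bound[where B=1]) (use range_l[OF that] mLj[OF that] in auto)
  have intI: "integrable M (I j)" for j
    by (rule integrable_const_bound[where B=1]) (auto simp: I_def mI)
  have ivj: "indep_var borel (\<lambda>\<omega>. L t \<omega> j) borel (I j)" for j
  proof -
    have m1: "(\<lambda>v. v j) \<in> measurable loss_space borel"
      unfolding loss_space_def by (rule measurable_component_singleton) simp
    have m2: "(\<lambda>h. if f (fst (snd h) t) = j then 1 else 0::real) \<in> measurable (history_space t) borel"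
    proof -
      have "(\<lambda>h. fst (snd h) t) \<in> measurable (history_space t) (count_space UNIV)"
        unfolding history_space_def using t
        by (intro measurable_compose[OF measurable_compose[OF measurable_snd measurable_fst]]
            measurable_component_singleton) auto
      then show ?thesis
        by (rule measurable_compose[of _ _ _ "\<lambda>x. if f x = j then 1 else 0"]) simp
    qed
    have hm: "history L S k t \<in> measurable M (history_space t)"
      by (intro hist_meas meas_l meas_S meas_k) auto
    from indep_rvs_var[OF indep_hist[OF t] meas_l[OF t] hm m1 m2] show ?thesis
      using t by (simp add: comp_def history_def I_def[abs_def])
  qed
  have "(\<integral>\<omega>. L t \<omega> (f (S t \<omega>)) \<partial>M) = (\<integral>\<omega>. (\<Sum>j\<in>UNIV. L t \<omega> j * I j \<omega>) \<partial>M)"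
    by (intro Bochner_Integration.integral_cong refl) (simp add: I_def if_distrib cong: if_cong)
  also have "\<dots> = (\<Sum>j\<in>UNIV. (\<integral>\<omega>. L t \<omega> j * I j \<omega> \<partial>M))"
    by (subst Bochner_Integration.integral_sum) (auto intro: indep_var_integrable[OF ivj intL[OF t] intI])
  also have "\<dots> = (\<Sum>j\<in>UNIV. (\<integral>\<omega>. L t \<omega> j \<partial>M) * (\<integral>\<omega>. I j \<omega> \<partial>M))"
    by (intro sum.cong refl indep_var_lebesgue_integral ivj intL intI t)
  also have "\<dots> = (\<Sum>j\<in>UNIV. (\<integral>\<omega>. L 1 \<omega> j \<partial>M) * (\<integral>\<omega>. I j \<omega> \<partial>M))"
  proof (intro sum.cong refl arg_cong2[where f="(*)"])
    fix j :: 'k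
    have m1: "(\<lambda>v. v j) \<in> borel_measurable loss_space"
      unfolding loss_space_def by (rule measurable_component_singleton) simp
    have "(\<integral>\<omega>. L t \<omega> j \<partial>M) = (\<integral>v. v j \<partial>distr M loss_space (L t))"
      by (rule integral_distr[OF meas_l[OF t] m1, symmetric])
    also have "\<dots> = (\<integral>v. v j \<partial>distr M loss_space (L 1))" using iid_ident[OF t] by simp
    also have "\<dots> = (\<integral>\<omega>. L 1 \<omega> j \<partial>M)"
      by (rule integral_distr[OF meas_l m1]) simp
    finally show "(\<integral>\<omega>. L t \<omega> j \<partial>M) = (\<integral>\<omega>. L 1 \<omega> j \<partial>M)" .
  qed
  also have "\<dots> = (\<integral>\<omega>. (\<Sum>j\<in>UNIV. (\<integral>\<omega>'. L 1 \<omega>' j \<partial>M) * I j \<omega>) \<partial>M)"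
    by (subst Bochner_Integration.integral_sum) (auto intro: intI)
  also have "\<dots> = (\<integral>\<omega>. (\<integral>\<omega>'. L 1 \<omega>' (f (S t \<omega>)) \<partial>M) \<partial>M)"
    by (intro Bochner_Integration.integral_cong refl) (simp add: I_def if_distrib cong: if_cong)
  finally show ?thesis .
qed

theorem mainTheorem7:
  fixes M :: "'w measure"
    and L :: "nat \<Rightarrow> 'w \<Rightarrow> 'k::finite \<Rightarrow> real"
    and S :: "nat \<Rightarrow> 'w \<Rightarrow> 'k set"
    and k :: "nat \<Rightarrow> 'w \<Rightarrow> 'k"
    and \<mu> :: "'k \<Rightarrow> real"
    and T :: nat
  assumes prob: "prob_space M"
    and meas_l: "\<And>t. t \<ge> 1 \<Longrightarrow> L t \<in> measurable M loss_space"
    and meas_S: "\<And>t. t \<ge> 1 \<Longrightarrow> S t \<in> measurable M (count_space UNIV)"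
    and meas_k: "\<And>t. t \<ge> 1 \<Longrightarrow> k t \<in> measurable M (count_space UNIV)"
    and range_l: "\<And>t \<omega> j. t \<ge> 1 \<Longrightarrow> \<omega> \<in> space M \<Longrightarrow> 0 \<le> L t \<omega> j \<and> L t \<omega> j \<le> 1"
    and iid_indep: "prob_space.indep_vars M (\<lambda>_. loss_space) L {1..}"
    and iid_ident: "\<And>t. t \<ge> 1 \<Longrightarrow> distr M loss_space (L t) = distr M loss_space (L 1)"
    and mean: "\<And>j. \<mu> j = (\<integral>\<omega>. L 1 \<omega> j \<partial>M)"
    and S_nonempty: "\<And>t \<omega>. t \<ge> 1 \<Longrightarrow> \<omega> \<in> space M \<Longrightarrow> S t \<omega> \<noteq> {}"
    and k_avail: "\<And>t \<omega>. t \<ge> 1 \<Longrightarrow> \<omega> \<in> space M \<Longrightarrow> k t \<omega> \<in> S t \<omega>"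
    and indep_hist: "\<And>t. t \<ge> 1 \<Longrightarrow>
       indep_rvs M loss_space (L t) (history_space t) (history L S k t)"
  shows "Max (policy_regret M L S k T ` policies)
       = Max ((\<lambda>\<sigma>. \<integral>\<omega>. ordering_regret L S k T \<sigma> \<omega> \<partial>M) ` orderings)"
proof -
  interpret prob_space M by (rule prob)
  define \<mu>1 where "\<mu>1 j = (\<integral>\<omega>. L 1 \<omega> j \<partial>M)" for j
  have mLj: "(\<lambda>\<omega>. L s \<omega> j) \<in> borel_measurable M" if "s \<ge> 1" for s j
  proof -
    have "(\<lambda>v. v j) \<in> borel_measurable loss_space"
      unfolding loss_space_def by (rule measurable_component_singleton) simp
    from measurable_compose[OF meas_l[OF that] this] show ?thesis .
  qed
  have mcomp: "(\<lambda>\<omega>. L s \<omega> (g \<omega>)) \<in> borel_measurable M"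
    if "s \<ge> 1" "g \<in> measurable M (count_space UNIV)" for s and g :: "'w \<Rightarrow> 'k"
  proof -
    have eq: "(\<lambda>\<omega>. L s \<omega> (g \<omega>)) = (\<lambda>\<omega>. \<Sum>j\<in>UNIV. (if g \<omega> = j then 1 else 0) * L s \<omega> j)"
      by (simp add: of_bool_def[symmetric] sum.delta)
    have "(\<lambda>\<omega>. if g \<omega> = j then 1 else 0::real) \<in> borel_measurable M" for j
      by (rule measurable_compose[OF that(2), of "\<lambda>x. if x = j then 1 else 0"]) simp
    then show ?thesis unfolding eq
      by (intro borel_measurable_sum borel_measurable_times mLj that)
  qed
  have intcomp: "integrable M (\<lambda>\<omega>. L s \<omega> (g \<omega>))"
    if "s \<ge> 1" "g \<in> measurable M (count_space UNIV)" for s and g :: "'w \<Rightarrow> 'k"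
    by (rule integrable_const_bound[where B=1]) (use range_l[OF that(1)] mcomp[OF that] in auto)
  have mSf: "(\<lambda>\<omega>. f (S t \<omega>)) \<in> measurable M (count_space UNIV)" if "t \<ge> 1" for t and f :: "'k set \<Rightarrow> 'k"
    by (rule measurable_compose[OF meas_S[OF that]]) simp
  have mu_bound: "0 \<le> \<mu>1 j \<and> \<mu>1 j \<le> 1" for j
  proof -
    have "0 \<le> \<mu>1 j" unfolding \<mu>1_def by (rule integral_nonneg_AE) (use range_l in auto)
    moreover have "\<mu>1 j \<le> (\<integral>\<omega>. 1 \<partial>M)" unfolding \<mu>1_def
      by (rule integral_mono) (use range_l intcomp[of 1 "\<lambda>_. j"] in auto)
    ultimately show ?thesis by (simp add: prob_space)
  qed
  have intmu: "integrable M (\<lambda>\<omega>. \<mu>1 (f (S t \<omega>)))" if "t \<ge> 1" for t and f :: "'k set \<Rightarrow> 'k"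
  proof (rule integrable_const_bound[where B=1])
    show "AE x in M. norm (\<mu>1 (f (S t x))) \<le> 1" using mu_bound by auto
    show "(\<lambda>x. \<mu>1 (f (S t x))) \<in> borel_measurable M"
      by (rule measurable_compose[OF mSf[OF that]]) simp
  qed
  define A where "A = (\<integral>\<omega>. (\<Sum>t\<in>{1..T}. L t \<omega> (k t \<omega>)) \<partial>M)"
  define V where "V f = (\<Sum>t\<in>{1..T}. \<integral>\<omega>. \<mu>1 (f (S t \<omega>)) \<partial>M)" for f :: "'k set \<Rightarrow> 'k"
  have pr: "policy_regret M L S k T f = A - V f" for f
  proof -
    have "(\<integral>\<omega>. (\<Sum>t\<in>{1..T}. L t \<omega> (f (S t \<omega>))) \<partial>M) = (\<Sum>t\<in>{1..T}. \<integral>\<omega>. L t \<omega> (f (S t \<omega>)) \<partial>M)"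
      by (rule Bochner_Integration.integral_sum) (rule intcomp[OF _ mSf]; simp)
    also have "\<dots> = V f" unfolding V_def \<mu>1_def
      by (intro sum.cong refl key_integral[OF prob meas_l meas_S meas_k range_l iid_ident indep_hist]) auto
    finally show ?thesis unfolding policy_regret_def A_def by simp
  qed
  have orr: "(\<integral>\<omega>. ordering_regret L S k T \<sigma> \<omega> \<partial>M) = policy_regret M L S k T (ord_select \<sigma>)" for \<sigma>
  proof -
    have i1: "integrable M (\<lambda>\<omega>. \<Sum>t\<in>{1..T}. L t \<omega> (k t \<omega>))"
      by (rule Bochner_Integration.integrable_sum) (rule intcomp[OF _ meas_k]; simp)
    have i2: "integrable M (\<lambda>\<omega>. \<Sum>t\<in>{1..T}. L t \<omega> (ord_select \<sigma> (S t \<omega>)))"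
      by (rule Bochner_Integration.integrable_sum) (rule intcomp[OF _ mSf]; simp)
    show ?thesis
      unfolding ordering_regret_def policy_regret_def sum_subtractf
      by (rule Bochner_Integration.integral_diff[OF i1 i2])
  qed
  obtain xs0 :: "'k list" where xs0: "set xs0 = UNIV" "distinct xs0"
    using finite_distinct_list[of "UNIV :: 'k set"] by auto
  define \<sigma>s where "\<sigma>s = sort_key \<mu>1 xs0"
  have \<sigma>s: "\<sigma>s \<in> orderings" "set \<sigma>s = UNIV" "sorted (map \<mu>1 \<sigma>s)"
    using xs0 by (auto simp: \<sigma>s_def orderings_def)
  have best: "V (ord_select \<sigma>s) \<le> V \<pi>" if "\<pi> \<in> policies" for \<pi>
    unfolding V_def
  proof (intro sum_mono integral_mono intmu)
    fix t \<omega> assume "t \<in> {1..T}" "\<omega> \<in> space M"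
    then have "\<pi> (S t \<omega>) \<in> S t \<omega>" using that S_nonempty by (auto simp: policies_def)
    then show "\<mu>1 (ord_select \<sigma>s (S t \<omega>)) \<le> \<mu>1 (\<pi> (S t \<omega>))"
      by (rule ord_select_min[OF \<sigma>s(3) \<sigma>s(2)])
  qed auto
  define P where "P = policy_regret M L S k T (ord_select \<sigma>s)"
  have pol: "ord_select \<sigma> \<in> policies" if "\<sigma> \<in> orderings" for \<sigma>
    using that by (intro ord_select_policy) (auto simp: orderings_def)
  have le: "policy_regret M L S k T \<pi> \<le> P" if "\<pi> \<in> policies" for \<pi>
    using best[OF that] unfolding P_def pr by simp
  have fin_ord: "finite (orderings :: 'k list set)"
  proof (rule finite_subset)
    show "orderings \<subseteq> {xs :: 'k list. set xs \<subseteq> UNIV \<and> length xs \<le> CARD('k)}"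
      by (auto simp: orderings_def distinct_card[symmetric] card_mono)
    show "finite {xs :: 'k list. set xs \<subseteq> UNIV \<and> length xs \<le> CARD('k)}"
      by (rule finite_lists_length_le) simp
  qed
  have "Max (policy_regret M L S k T ` policies) = P"
    by (rule Max_eqI) (use le pol[OF \<sigma>s(1)] in \<open>auto simp: P_def\<close>)
  moreover have "Max ((\<lambda>\<sigma>. \<integral>\<omega>. ordering_regret L S k T \<sigma> \<omega> \<partial>M) ` orderings) = P"
    by (rule Max_eqI) (use fin_ord le pol \<sigma>s(1) in \<open>auto simp: orr P_def\<close>)
  ultimately show ?thesis by simp
qed

end
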